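(* Under the standing assumptions of the context, there are constants $0<\tilde c_0\le1\le\tilde c$ such that for every $\ell\ge1$ and every $n\ge2$ with $\mathcal K_\ell\cap[1,n)^2\ne\emptyset$, \[ \frac{\tilde c_0}{\ell^2}\le\delta_\ell(n)\le\frac{\tilde c}{\ell^2},\qquad\text{where }\ \delta_\ell(n)=\frac{\#(\mathcal K_\ell\cap[1,n)^2)}{n^2-n}. \]
   Context: Standing assumptions: $A=\{0,1\}$, $\Sigma=A^{\mathbb N_0}$ with metric $\rho(y,z)=2^{-\min\{i\ge0:\,y_i\ne z_i\}}$ ($y\ne z$) and shift $\sigma$. $\zeta:A\to A^*$ is a binary substitution of constant length $q\ge2$ ($|\zeta(0)|=|\zeta(1)|=q$, extended to words and sequences by concatenation), which is primitive (for some $k$, every letter occurs in $\zeta^k(a)$ for all $a$), aperiodic (the subshift $X_\zeta$ of all sequences whose finite subwords are subwords of some $\zeta^k(a)$ contains a non-$\sigma$-periodic sequence), and such that $\zeta(0)$ starts with $0$; $x=\lim_k\zeta^k(0)$ is the unique fixed point of $\zeta$ starting with $0$. Recurrence plot $R(x,\infty,1/2)$: the matrix indexed by $i,j\in\mathbb N_0$ with entry $1$ iff $x_i=x_j$ (i.e. $\rho(\sigma^ix,\sigma^jx)\le1/2$). A line of length $\ell$ in it is $(i,j,\ell)$ with $i\ne j$, entries $(i+k,j+k)=1$ for $0\le k<\ell$, entry $(i-1,j-1)=0$ if $\min\{i,j\}>0$, and entry $(i+\ell,j+\ell)=0$; it is inner if $\min\{i,j\}>0$. $\mathcal K_\ell=\{(i,j)\in\mathbb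 N^2:(i,j,\ell)\text{ is an inner line in }R(x,\infty,1/2)\}$, $\mathbb N$ the positive integers, $[1,n)=\{1,\dots,n-1\}$. *)

theory Defs
  imports Complex_Main
begin

text \<open>Letters of the alphabet A = {0,1} are the naturals 0 and 1; a substitution is
  a map zeta :: nat => nat list (only its values on 0 and 1 matter).\<close>

definition subst_word :: "(nat \<Rightarrow> nat list) \<Rightarrow> nat list \<Rightarrow> nat list" where
  "subst_word \<zeta> w = concat (map \<zeta> w)"

definition subst_iter :: "(nat \<Rightarrow> nat list) \<Rightarrow> nat \<Rightarrow> nat \<Rightarrow> nat list" where
  "subst_iter \<zeta> k a = (subst_word \<zeta> ^^ k) [a]"

definition is_factor :: "nat list \<Rightarrow> nat list \<Rightarrow> bool" where
  "is_factor w s \<longleftrightarrow> (\<exists>u v. s = u @ w @ v)"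

definition binary_subst :: "(nat \<Rightarrow> nat list) \<Rightarrow> bool" where
  "binary_subst \<zeta> \<longleftrightarrow> (\<forall>a\<in>{0,1}. set (\<zeta> a) \<subseteq> {0,1})"

definition const_length :: "(nat \<Rightarrow> nat list) \<Rightarrow> nat \<Rightarrow> bool" where
  "const_length \<zeta> q \<longleftrightarrow> length (\<zeta> 0) = q \<and> length (\<zeta> 1) = q"

definition primitive_subst :: "(nat \<Rightarrow> nat list) \<Rightarrow> bool" where
  "primitive_subst \<zeta> \<longleftrightarrow> (\<exists>k. \<forall>a\<in>{0,1}. \<forall>b\<in>{0,1}. b \<in> set (subst_iter \<zeta> k a))"

definition subshift :: "(nat \<Rightarrow> nat list) \<Rightarrow> (nat \<Rightarrow> nat) set" where
  "subshift \<zeta> = {y. (\<forall>i. y i \<in> {0,1}) \<and>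
     (\<forall>i m. \<exists>k. \<exists>a\<in>{0,1}. is_factor (map y [i..<i+m]) (subst_iter \<zeta> k a))}"

definition shift_periodic :: "(nat \<Rightarrow> nat) \<Rightarrow> bool" where
  "shift_periodic y \<longleftrightarrow> (\<exists>p>0. \<forall>i. y (i + p) = y i)"

definition aperiodic_subst :: "(nat \<Rightarrow> nat list) \<Rightarrow> bool" where
  "aperiodic_subst \<zeta> \<longleftrightarrow> (\<exists>y\<in>subshift \<zeta>. \<not> shift_periodic y)"

definition is_fixpoint_limit :: "(nat \<Rightarrow> nat list) \<Rightarrow> (nat \<Rightarrow> nat) \<Rightarrow> bool" where
  "is_fixpoint_limit \<zeta> x \<longleftrightarrow>
     (\<forall>k i. i < length (subst_iter \<zeta> k 0) \<longrightarrow> x i = subst_iter \<zeta> k 0 ! i)"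

text \<open>Line (i,j,l) in the recurrence plot R(x,infinity,1/2), entry (i,j) = 1 iff x i = x j.\<close>
definition rp_line :: "(nat \<Rightarrow> nat) \<Rightarrow> nat \<Rightarrow> nat \<Rightarrow> nat \<Rightarrow> bool" where
  "rp_line x i j l \<longleftrightarrow> i \<noteq> j \<and> (\<forall>k<l. x (i + k) = x (j + k)) \<and>
     (min i j > 0 \<longrightarrow> x (i - 1) \<noteq> x (j - 1)) \<and> x (i + l) \<noteq> x (j + l)"

definition inner_lines :: "(nat \<Rightarrow> nat) \<Rightarrow> nat \<Rightarrow> (nat \<times> nat) set" where
  "inner_lines x l = {(i, j). i > 0 \<and> j > 0 \<and> rp_line x i j l}"

definition line_density :: "(nat \<Rightarrow> nat) \<Rightarrow> nat \<Rightarrow> nat \<Rightarrow> real" where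
  "line_density x l n =
     real (card (inner_lines x l \<inter> ({1..<n} \<times> {1..<n}))) / (real n ^ 2 - real n)"

end

theory Submission
  imports Defs
begin

lemma subst_word_append[simp]: "subst_word z (u @ v) = subst_word z u @ subst_word z v"
  by (simp add: subst_word_def)

lemma subst_word_Nil[simp]: "subst_word z [] = []"
  by (simp add: subst_word_def)

lemma subst_word_single[simp]: "subst_word z [a] = z a"
  by (simp add: subst_word_def)

lemma funpow_sw_Nil[simp]: "(subst_word z ^^ k) [] = []"
  by (induction k) auto

lemma funpow_sw_append: "(subst_word z ^^ k) (u @ v) = (subst_word z ^^ k) u @ (subst_word z ^^ k) v"
  by (induction k arbitrary: u v) auto

lemma funpow_sw_concat: "(subst_word z ^^ k) w = concat (map (subst_iter z k) w)"
proof (induction w)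
  case Nil then show ?case by simp
next
  case (Cons a w)
  have "(subst_word z ^^ k) (a # w) = (subst_word z ^^ k) [a] @ (subst_word z ^^ k) w"
    using funpow_sw_append[where z=z and k=k and u="[a]" and v=w] by simp
  then show ?case using Cons by (simp add: subst_iter_def)
qed

lemma subst_iter_add: "subst_iter z (k + m) a = (subst_word z ^^ k) (subst_iter z m a)"
  by (simp add: subst_iter_def funpow_add)

lemma concat_nth_blocks:
  assumes "\<forall>v\<in>set ws. length v = b" "t < length ws" "c < b"
  shows "concat ws ! (b * t + c) = ws ! t ! c"
  using assms
proof (induction ws arbitrary: t)
  case Nil then show ?case by simp
next
  case (Cons v ws)
  show ?case
  proof (cases t)
    case 0 then show ?thesis using Cons.prems by (simp add: nth_append)
  next
    case (Suc t')
    have "concat (v # ws) ! (b * t + c) = concat ws ! (b * t' + c)"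
      using Cons.prems Suc by (simp add: nth_append algebra_simps)
    then show ?thesis using Cons Suc by simp
  qed
qed

locale bsub =
  fixes z :: "nat \<Rightarrow> nat list" and q :: nat
  assumes bin: "binary_subst z" and q2: "q \<ge> 2" and cl: "const_length z q"
begin

lemma z_len: "a \<in> {0,1} \<Longrightarrow> length (z a) = q"
  using cl by (auto simp: const_length_def)

lemma z_set: "a \<in> {0,1} \<Longrightarrow> set (z a) \<subseteq> {0,1}"
  using bin by (auto simp: binary_subst_def)

lemma sw_props: "set w \<subseteq> {0,1} \<Longrightarrow> set (subst_word z w) \<subseteq> {0,1} \<and> length (subst_word z w) = q * length w"
proof (induction w)
  case Nil then show ?case by simp
next
  case (Cons a w)
  have "subst_word z (a # w) = z a @ subst_word z w"
    using subst_word_append[of z "[a]" w] by simp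
  then show ?case using Cons z_len[of a] z_set[of a] by auto
qed

lemma fsw_props: "set w \<subseteq> {0,1} \<Longrightarrow> set ((subst_word z ^^ k) w) \<subseteq> {0,1} \<and> length ((subst_word z ^^ k) w) = q^k * length w"
proof (induction k)
  case 0 then show ?case by simp
next
  case (Suc k)
  then show ?case using sw_props[of "(subst_word z ^^ k) w"] by simp
qed

lemma si_len: "a \<in> {0,1} \<Longrightarrow> length (subst_iter z k a) = q ^ k"
  using fsw_props[of "[a]" k] by (auto simp: subst_iter_def)

lemma si_set: "a \<in> {0,1} \<Longrightarrow> set (subst_iter z k a) \<subseteq> {0,1}"
  using fsw_props[of "[a]" k] by (auto simp: subst_iter_def)

lemma si_nth_set: "a \<in> {0,1} \<Longrightarrow> c < q^k \<Longrightarrow> subst_iter z k a ! c \<in> {0,1}"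
proof -
  assume a: "a \<in> {0,1}" and c: "c < q^k"
  have "subst_iter z k a ! c \<in> set (subst_iter z k a)" using c si_len[OF a, of k] by simp
  then show ?thesis using si_set[OF a, of k] by blast
qed

lemma blk:
  assumes "set w \<subseteq> {0,1}" "t < length w" "c < q^k"
  shows "(subst_word z ^^ k) w ! (q^k * t + c) = subst_iter z k (w ! t) ! c"
proof -
  have "\<forall>v\<in>set (map (subst_iter z k) w). length v = q^k"
    using assms(1) si_len by auto
  then show ?thesis
    using concat_nth_blocks[of "map (subst_iter z k) w" "q^k" t c] assms
    by (simp add: funpow_sw_concat)
qed

lemma si_blk:
  assumes "a \<in> {0,1}" "t < q^m" "c < q^k"
  shows "subst_iter z (k + m) a ! (q^k * t + c) = subst_iter z k (subst_iter z m a ! t) ! c"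
  using blk[of "subst_iter z m a" t c k] assms si_len si_set subst_iter_add by simp

lemma q_pow_gt: "T < q ^ T"
proof -
  have "T < 2 ^ T" by (rule less_exp)
  also have "\<dots> \<le> q ^ T" using q2 by (simp add: power_mono)
  finally show ?thesis .
qed

end


locale fp = bsub +
  fixes x :: "nat \<Rightarrow> nat"
  assumes fixp: "is_fixpoint_limit z x" and prim: "primitive_subst z"
begin

lemma x_si: "i < q^k \<Longrightarrow> x i = subst_iter z k 0 ! i"
  using fixp si_len[of 0 k] by (auto simp: is_fixpoint_limit_def)

lemma x_bin: "x i \<in> {0,1}"
proof -
  have "i < q^i" by (rule q_pow_gt)
  then show ?thesis using x_si[of i i] si_nth_set[of 0 i i] by simp
qed

lemma xblk:
  assumes "c < q^k"
  shows "x (q^k * T + c) = subst_iter z k (x T) ! c"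
proof -
  have T: "T < q^T" by (rule q_pow_gt)
  have "q^k * T + c < q^k * (T + 1)" using assms by simp
  also have "\<dots> \<le> q^k * q^T" using T by (intro mult_le_mono2) simp
  finally have "q^k * T + c < q^(k + T)" by (simp add: power_add)
  then have "x (q^k * T + c) = subst_iter z (k + T) 0 ! (q^k * T + c)" by (rule x_si)
  also have "\<dots> = subst_iter z k (subst_iter z T 0 ! T) ! c"
    using si_blk[of 0 T T c k] T assms by simp
  also have "subst_iter z T 0 ! T = x T" using x_si[OF T] by simp
  finally show ?thesis .
qed

lemma xblk2:
  assumes "c < 2 * q^k"
  shows "x (q^k * T + c) = (subst_iter z k (x T) @ subst_iter z k (x (Suc T))) ! c"
proof (cases "c < q^k")
  case True
  then show ?thesis using xblk[OF True, of T] si_len[OF x_bin[of T]] by (simp add: nth_append)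
next
  case False
  then have c': "c - q^k < q^k" using assms by simp
  have "x (q^k * T + c) = x (q^k * Suc T + (c - q^k))" using False by simp
  also have "\<dots> = subst_iter z k (x (Suc T)) ! (c - q^k)" by (rule xblk[OF c'])
  finally show ?thesis using False si_len[OF x_bin[of T]] by (simp add: nth_append)
qed

lemma si_blk2:
  assumes "a \<in> {0,1}" "Suc r < q^P" "c < 2 * q^k"
  shows "subst_iter z (k + P) a ! (q^k * r + c) =
     (subst_iter z k (subst_iter z P a ! r) @ subst_iter z k (subst_iter z P a ! Suc r)) ! c"
proof -
  have r: "r < q^P" using assms by simp
  have b1: "subst_iter z P a ! r \<in> {0,1}" using si_nth_set[OF assms(1) r] .
  show ?thesis
  proof (cases "c < q^k")
    case True
    then show ?thesis using si_blk[OF assms(1) r True] si_len[OF b1] by (simp add: nth_append)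
  next
    case False
    then have c': "c - q^k < q^k" using assms by simp
    have "subst_iter z (k + P) a ! (q^k * r + c) = subst_iter z (k + P) a ! (q^k * Suc r + (c - q^k))"
      using False by simp
    also have "\<dots> = subst_iter z k (subst_iter z P a ! Suc r) ! (c - q^k)"
      by (rule si_blk[OF assms(1) assms(2) c'])
    finally show ?thesis using False si_len[OF b1] by (simp add: nth_append)
  qed
qed

definition good :: "nat \<Rightarrow> nat \<times> nat \<Rightarrow> bool" where
  "good P v \<longleftrightarrow> (\<forall>e\<in>{0,1}. \<exists>r. Suc r < q^P \<and> subst_iter z P e ! r = fst v \<and> subst_iter z P e ! Suc r = snd v)"

lemma good_Suc: "good P v \<Longrightarrow> good (Suc P) v"
  unfolding good_def
proof (intro ballI)
  fix e :: nat assume g: "\<forall>e\<in>{0,1}. \<exists>r. Suc r < q^P \<and> subst_iter z P e ! r = fst v \<and> subst_iter z P e ! Suc r = snd v"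
    and e: "e \<in> {0,1}"
  have q0: "0 < q^1" using q2 by simp
  have e1: "subst_iter z 1 e ! 0 \<in> {0,1}" using si_nth_set[OF e q0] .
  obtain r where r: "Suc r < q^P" "subst_iter z P (subst_iter z 1 e ! 0) ! r = fst v"
     "subst_iter z P (subst_iter z 1 e ! 0) ! Suc r = snd v"
    using g e1 by blast
  have A: "subst_iter z (P + 1) e ! (q^P * 0 + r) = subst_iter z P (subst_iter z 1 e ! 0) ! r"
    using si_blk[OF e q0, of r P] r by simp
  have B: "subst_iter z (P + 1) e ! (q^P * 0 + Suc r) = subst_iter z P (subst_iter z 1 e ! 0) ! Suc r"
    using si_blk[OF e q0, of "Suc r" P] r by simp
  have "q^P \<le> q^(Suc P)" using q2 by simp
  then have "Suc r < q^(Suc P)" using r(1) by linarith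
  then show "\<exists>r. Suc r < q^Suc P \<and> subst_iter z (Suc P) e ! r = fst v \<and> subst_iter z (Suc P) e ! Suc r = snd v"
    using A B r by auto
qed

lemma good_mono: "good P v \<Longrightarrow> P \<le> P' \<Longrightarrow> good P' v"
proof (induction P')
  case 0 then show ?case by simp
next
  case (Suc P') then show ?case by (auto simp: le_Suc_eq intro: good_Suc)
qed

lemma good_pair: "\<exists>P. good P (x t, x (Suc t))"
proof -
  obtain Kp where Kp: "\<forall>a\<in>{0,1}. \<forall>b\<in>{0,1}. b \<in> set (subst_iter z Kp a)"
    using prim by (auto simp: primitive_subst_def)
  define M where "M = Suc (Suc t)"
  have tM: "Suc t < q^M" using q_pow_gt[of M] unfolding M_def by simp
  have "good (M + Kp) (x t, x (Suc t))"
    unfolding good_def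
  proof (intro ballI)
    fix e :: nat assume e: "e \<in> {0,1}"
    have "0 \<in> set (subst_iter z Kp e)" using Kp e by auto
    then obtain r0 where r0: "r0 < q^Kp" "subst_iter z Kp e ! r0 = 0"
      using si_len[OF e, of Kp] by (auto simp: in_set_conv_nth)
    have A: "subst_iter z (M + Kp) e ! (q^M * r0 + t) = subst_iter z M 0 ! t"
      using si_blk[OF e r0(1), of t M] tM r0 by simp
    have B: "subst_iter z (M + Kp) e ! (q^M * r0 + Suc t) = subst_iter z M 0 ! Suc t"
      using si_blk[OF e r0(1), of "Suc t" M] tM r0 by simp
    have "Suc (q^M * r0 + t) < q^M * (r0 + 1)" using tM by simp
    also have "\<dots> \<le> q^M * q^Kp" using r0(1) by (intro mult_le_mono2) simp
    finally have lt: "Suc (q^M * r0 + t) < q^(M + Kp)" by (simp add: power_add)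
    show "\<exists>r. Suc r < q^(M + Kp) \<and> subst_iter z (M + Kp) e ! r = fst (x t, x (Suc t)) \<and>
            subst_iter z (M + Kp) e ! Suc r = snd (x t, x (Suc t))"
      apply (rule exI[of _ "q^M * r0 + t"])
      using lt A B x_si[of t M] x_si[OF tM] tM by simp
  qed
  then show ?thesis by blast
qed

lemma good_unif: "\<exists>P. \<forall>t. good P (x t, x (Suc t))"
proof -
  define V where "V = range (\<lambda>t. (x t, x (Suc t)))"
  have fin: "finite V"
  proof (rule finite_subset)
    show "V \<subseteq> {0,1} \<times> {0,1}" unfolding V_def by (intro image_subsetI SigmaI x_bin)
  qed simp
  define f where "f v = (LEAST P. good P v)" for v
  have gf: "good (f v) v" if "v \<in> V" for v
    using that good_pair unfolding V_def f_def by (auto intro: LeastI_ex)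
  define P where "P = (\<Sum>v\<in>V. f v)"
  have "good P v" if "v \<in> V" for v
    using good_mono[OF gf[OF that]] member_le_sum[OF that, of f] fin unfolding P_def by simp
  then show ?thesis unfolding V_def by blast
qed

end


context fp begin

lemma exists_k: "m \<ge> 1 \<Longrightarrow> \<exists>k. m \<le> q^k \<and> q^k \<le> q * m"
proof -
  assume m: "m \<ge> 1"
  define k where "k = (LEAST k. m \<le> q^k)"
  have ex: "\<exists>k. m \<le> q^k" using q_pow_gt[of m] by (auto intro: less_imp_le)
  have mk: "m \<le> q^k" unfolding k_def by (rule LeastI_ex[OF ex])
  have "q^k \<le> q * m"
  proof (cases k)
    case 0 then show ?thesis using m q2 by (simp add: mult_le_mono)
  next
    case (Suc k')
    have "k' < k" using Suc by simp
    then have "\<not> m \<le> q^k'" unfolding k_def by (rule not_less_Least)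
    then have "q^k' < m" by simp
    then show ?thesis using Suc by simp
  qed
  then show ?thesis using mk by blast
qed

lemma LR: "\<exists>C::nat. C \<ge> 1 \<and> (\<forall>m t s. m \<ge> 1 \<longrightarrow>
   (\<exists>u. s \<le> u \<and> u + m \<le> s + C * m \<and> (\<forall>r<m. x (u + r) = x (t + r))))"
proof -
  obtain P where P: "\<And>t. good P (x t, x (Suc t))" using good_unif by blast
  define C where "C = 2 * q^(Suc P)"
  have C1: "C \<ge> 1" using q2 unfolding C_def by simp
  have main: "\<exists>u. s \<le> u \<and> u + m \<le> s + C * m \<and> (\<forall>r<m. x (u + r) = x (t + r))"
    if m: "m \<ge> 1" for m t s
  proof -
    obtain k where k: "m \<le> q^k" "q^k \<le> q * m" using exists_k[OF m] by blast
    define Q where "Q = q^k"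
    define T where "T = t div Q"
    define c where "c = t mod Q"
    have Qpos: "Q > 0" using q2 unfolding Q_def by simp
    have tdec: "t = Q * T + c" unfolding T_def c_def by simp
    have cQ: "c < Q" unfolding c_def using Qpos by simp
    define QP where "QP = q^(k + P)"
    have QPQ: "QP = Q * q^P" unfolding QP_def Q_def by (simp add: power_add)
    define B where "B = s div QP + 1"
    have QPpos: "QP > 0" using q2 unfolding QP_def by simp
    have sB: "s \<le> QP * B"
    proof -
      have e1: "s = QP * (s div QP) + s mod QP" by (rule div_mult_mod_eq[symmetric, simplified mult.commute])
      have e2: "s mod QP < QP" using QPpos by simp
      have e3: "QP * B = QP * (s div QP) + QP" by (simp add: B_def algebra_simps)
      show ?thesis using e1 e2 e3 by linarith
    qed
    have sB2: "QP * B + QP \<le> s + 2 * QP"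
    proof -
      have "QP * (s div QP) \<le> s" by simp
      then show ?thesis unfolding B_def by (simp add: algebra_simps)
    qed
    have e: "x B \<in> {0,1}" by (rule x_bin)
    obtain \<rho> where \<rho>: "Suc \<rho> < q^P" "subst_iter z P (x B) ! \<rho> = x T"
        "subst_iter z P (x B) ! Suc \<rho> = x (Suc T)"
      using P[of T] e unfolding good_def by auto
    define u where "u = QP * B + Q * \<rho> + c"
    have bnd: "Q * \<rho> + 2 * Q \<le> QP"
    proof -
      have "Q * (\<rho> + 2) \<le> Q * q^P" using \<rho>(1) by (intro mult_le_mono2) simp
      then show ?thesis using QPQ by (simp add: algebra_simps)
    qed
    have eq: "x (u + r) = x (t + r)" if r: "r < m" for r
    proof -
      have cr: "c + r < 2 * q^k" using cQ r k(1) unfolding Q_def by simp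
      have "x (t + r) = x (q^k * T + (c + r))" using tdec unfolding Q_def by (simp add: algebra_simps)
      also have "\<dots> = (subst_iter z k (x T) @ subst_iter z k (x (Suc T))) ! (c + r)"
        by (rule xblk2[OF cr])
      finally have L: "x (t + r) = (subst_iter z k (x T) @ subst_iter z k (x (Suc T))) ! (c + r)" .
      have lt: "Q * \<rho> + (c + r) < QP" using bnd cQ r k(1) unfolding Q_def by simp
      have "x (u + r) = x (QP * B + (Q * \<rho> + (c + r)))" unfolding u_def by (simp add: algebra_simps)
      also have "\<dots> = subst_iter z (k + P) (x B) ! (Q * \<rho> + (c + r))"
        using xblk[of "Q * \<rho> + (c + r)" "k + P" B] lt unfolding QP_def by simp
      also have "\<dots> = (subst_iter z k (subst_iter z P (x B) ! \<rho>) @ subst_iter z k (subst_iter z P (x B) ! Suc \<rho>)) ! (c + r)"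
        unfolding Q_def by (rule si_blk2[OF e \<rho>(1) cr])
      finally show ?thesis using L \<rho> by simp
    qed
    have "u + m \<le> QP * B + QP" using bnd cQ k(1) unfolding u_def Q_def by simp
    also have "\<dots> \<le> s + 2 * QP" by (rule sB2)
    also have "QP \<le> q^Suc P * m"
    proof -
      have "QP = q^k * q^P" using QPQ unfolding Q_def .
      also have "\<dots> \<le> (q * m) * q^P" using k(2) by (intro mult_le_mono1)
      finally show ?thesis by (simp add: algebra_simps)
    qed
    then have "s + 2 * QP \<le> s + C * m" unfolding C_def by simp
    finally have "u + m \<le> s + C * m" .
    moreover have "s \<le> u" using sB unfolding u_def by simp
    ultimately show ?thesis using eq by blast
  qed
  show ?thesis using C1 main by blast
qed

end


context fp begin

lemma occ_letter: "b \<in> {0,1} \<Longrightarrow> \<exists>T. x T = b"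
proof -
  assume b: "b \<in> {0,1}"
  have x0: "x 0 = 0" using x_si[of 0 0] by (simp add: subst_iter_def)
  obtain Kp where Kp: "\<forall>a\<in>{0,1}. \<forall>b\<in>{0,1}. b \<in> set (subst_iter z Kp a)"
    using prim by (auto simp: primitive_subst_def)
  have "1 \<in> set (subst_iter z Kp 0)" using Kp by auto
  then obtain r where "r < q^Kp" "subst_iter z Kp 0 ! r = 1"
    using si_len[of 0 Kp] by (auto simp: in_set_conv_nth)
  then have "x r = 1" using x_si by simp
  then show ?thesis using b x0 by auto
qed

lemma factor_in_x:
  assumes "a \<in> {0,1}" "subst_iter z k a = u @ w @ v"
  shows "\<exists>p. \<forall>r<length w. x (p + r) = w ! r"
proof -
  obtain T where T: "x T = a" using occ_letter[OF assms(1)] by blast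
  have len: "length (u @ w @ v) = q^k" using si_len[OF assms(1), of k] assms(2) by simp
  have "x (q^k * T + length u + r) = w ! r" if r: "r < length w" for r
  proof -
    have lt: "length u + r < q^k" using len r by simp
    have "x (q^k * T + (length u + r)) = subst_iter z k a ! (length u + r)"
      using xblk[OF lt, of T] T by simp
    then show ?thesis using assms(2) r by (simp add: nth_append add.assoc)
  qed
  then show ?thesis by (metis add.assoc)
qed

lemma not_periodic:
  assumes aper: "aperiodic_subst z" and D: "D \<ge> 1"
  shows "\<not> (\<forall>t. x (t + D) = x t)"
proof
  assume per: "\<forall>t. x (t + D) = x t"
  obtain y where y: "y \<in> subshift z" "\<not> shift_periodic y"
    using aper by (auto simp: aperiodic_subst_def)
  have "y (i + D) = y i" for i
  proof -
    obtain k a where ka: "a \<in> {0,1}" "is_factor (map y [i..<i + Suc D]) (subst_iter z k a)"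
      using y(1) unfolding subshift_def by blast
    then obtain u v where uv: "subst_iter z k a = u @ map y [i..<i + Suc D] @ v"
      by (auto simp: is_factor_def)
    obtain p where p: "\<forall>r<length (map y [i..<i + Suc D]). x (p + r) = map y [i..<i + Suc D] ! r"
      using factor_in_x[OF ka(1) uv] by blast
    have "x (p + D) = y (i + D)" using p[rule_format, of D] by (simp add: nth_append)
    moreover have "x (p + 0) = y (i + 0)" using p[rule_format, of 0] D by (simp add: nth_append)
    moreover have "x (p + D) = x p" using per by simp
    ultimately show ?thesis by simp
  qed
  then have "shift_periodic y" using D unfolding shift_periodic_def by (auto intro!: exI[of _ D])
  then show False using y(2) by simp
qed

end

locale fpa = fp +
  assumes aper: "aperiodic_subst z"
begin

lemma repulsion_gen:
  assumes C: "C \<ge> 1" and LRC: "\<forall>m t s. m \<ge> 1 \<longrightarrow>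
   (\<exists>u. s \<le> u \<and> u + m \<le> s + C * m \<and> (\<forall>r<m. x (u + r) = x (t + r)))"
    and pp: "p < p'" and eqs: "\<forall>t<L. x (p + t) = x (p' + t)"
  shows "L < 2 * C * (p' - p)"
proof (rule ccontr)
  assume "\<not> L < 2 * C * (p' - p)"
  then have L: "L \<ge> 2 * C * (p' - p)" by simp
  define D where "D = p' - p"
  have D1: "D \<ge> 1" using pp unfolding D_def by simp
  have "C * (D + 1) \<le> 2 * C * D" using D1 by (simp add: algebra_simps)
  then have LD: "C * (D + 1) \<le> L + D" using L unfolding D_def by linarith
  have "x (t + D) = x t" for t
  proof -
    obtain u where u: "p \<le> u" "u + (D + 1) \<le> p + C * (D + 1)" "\<forall>r<D + 1. x (u + r) = x (t + r)"
      using LRC[rule_format, of "D + 1" p t] by auto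
    have "u - p < L" using u(1,2) LD by linarith
    then have "x (p + (u - p)) = x (p' + (u - p))" using eqs by blast
    then have "x u = x (u + D)" using u(1) pp unfolding D_def by (simp add: algebra_simps)
    moreover have "x (u + 0) = x (t + 0)" using u(3)[rule_format, of 0] by simp
    moreover have "x (u + D) = x (t + D)" using u(3)[rule_format, of D] by simp
    ultimately show ?thesis by simp
  qed
  then show False using not_periodic[OF aper D1] by blast
qed

end


definition LRP :: "(nat \<Rightarrow> nat) \<Rightarrow> nat \<Rightarrow> bool" where
  "LRP x C \<longleftrightarrow> C \<ge> 1 \<and> (\<forall>m t s. m \<ge> 1 \<longrightarrow>
   (\<exists>u. s \<le> u \<and> u + m \<le> s + C * m \<and> (\<forall>r<m. x (u + r) = x (t + r))))"

lemma occ_card: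
  assumes LR: "LRP x C" and m: "m \<ge> 1" and i0: "i0 \<in> {1..<n}"
  defines "Occ \<equiv> {i \<in> {1..<n}. \<forall>r<m. x (i - 1 + r) = x (i0 - 1 + r)}"
  shows "card Occ \<ge> max 1 ((n - 1) div (C * m))"
proof -
  have C1: "C \<ge> 1" using LR by (simp add: LRP_def)
  have finO: "finite Occ" unfolding Occ_def by simp
  have "i0 \<in> Occ" using i0 unfolding Occ_def by simp
  then have c1: "card Occ \<ge> 1" using finO by (metis One_nat_def Suc_leI card_gt_0_iff empty_iff)
  define N where "N = (n - 1) div (C * m)"
  have ex: "\<exists>u. b * (C * m) \<le> u \<and> u + m \<le> b * (C * m) + C * m \<and> (\<forall>r<m. x (u + r) = x (i0 - 1 + r))" for b
    using LR m unfolding LRP_def by blast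
  define g where "g b = (SOME u. b * (C * m) \<le> u \<and> u + m \<le> b * (C * m) + C * m \<and> (\<forall>r<m. x (u + r) = x (i0 - 1 + r)))" for b
  have gp: "b * (C * m) \<le> g b \<and> g b + m \<le> b * (C * m) + C * m \<and> (\<forall>r<m. x (g b + r) = x (i0 - 1 + r))" for b
    unfolding g_def by (rule someI_ex[OF ex])
  have inj: "inj_on (\<lambda>b. g b + 1) {..<N}"
  proof (rule inj_onI)
    fix a b assume "a \<in> {..<N}" "b \<in> {..<N}" "g a + 1 = g b + 1"
    then have gab: "g a = g b" by simp
    have "a * (C * m) \<le> g a" "g a < a * (C * m) + C * m" using gp[of a] m by auto
    moreover have "b * (C * m) \<le> g b" "g b < b * (C * m) + C * m" using gp[of b] m by auto
    ultimately have "a * (C * m) < (b + 1) * (C * m)" "b * (C * m) < (a + 1) * (C * m)" using gab by auto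
    then have "a < b + 1" "b < a + 1" using mult_less_cancel2 by blast+
    then show "a = b" by simp
  qed
  have img: "(\<lambda>b. g b + 1) ` {..<N} \<subseteq> Occ"
  proof
    fix i assume "i \<in> (\<lambda>b. g b + 1) ` {..<N}"
    then obtain b where b: "b < N" "i = g b + 1" by auto
    have "(b + 1) * (C * m) \<le> N * (C * m)" using b(1) by (intro mult_le_mono1) simp
    also have "N * (C * m) \<le> n - 1" unfolding N_def by simp
    finally have "g b + m \<le> n - 1" using gp[of b] by (simp add: algebra_simps)
    then have "i < n" using b(2) m by simp
    then show "i \<in> Occ" using gp[of b] b(2) unfolding Occ_def by simp
  qed
  have "N \<le> card Occ" using card_inj_on_le[OF inj img finO] by simp
  then show ?thesis using c1 unfolding N_def by simp
qed

lemma line_from_occ: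
  assumes "(i0, j0) \<in> inner_lines x l" "i \<ge> 1" "j \<ge> 1"
    "\<forall>r<l + 2. x (i - 1 + r) = x (i0 - 1 + r)" "\<forall>r<l + 2. x (j - 1 + r) = x (j0 - 1 + r)"
  shows "(i, j) \<in> inner_lines x l"
proof -
  have L: "i0 > 0" "j0 > 0" "i0 \<noteq> j0" "\<forall>k<l. x (i0 + k) = x (j0 + k)"
    "x (i0 - 1) \<noteq> x (j0 - 1)" "x (i0 + l) \<noteq> x (j0 + l)"
    using assms(1) by (auto simp: inner_lines_def rp_line_def)
  have a: "x (i - 1) = x (i0 - 1)" using assms(4)[rule_format, of 0] by simp
  have b: "x (j - 1) = x (j0 - 1)" using assms(5)[rule_format, of 0] by simp
  have c: "x (i + k) = x (i0 + k)" if "k \<le> l" for k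
    using assms(4)[rule_format, of "k + 1"] that assms(2) L(1) by simp
  have d: "x (j + k) = x (j0 + k)" if "k \<le> l" for k
    using assms(5)[rule_format, of "k + 1"] that assms(3) L(2) by simp
  have "i \<noteq> j" using a b L(5) by auto
  moreover have "\<forall>k<l. x (i + k) = x (j + k)" using c d L(4) by simp
  moreover have "x (i - 1) \<noteq> x (j - 1)" using a b L(5) by simp
  moreover have "x (i + l) \<noteq> x (j + l)" using c[of l] d[of l] L(6) by simp
  ultimately show ?thesis using assms(2,3) by (auto simp: inner_lines_def rp_line_def)
qed

lemma lower_nat:
  assumes LR: "LRP x C" and l: "l \<ge> 1" and n: "n \<ge> 2"
    and w: "(i0, j0) \<in> inner_lines x l \<inter> ({1..<n} \<times> {1..<n})"
  shows "n * (n - 1) \<le> 72 * C^2 * l^2 * card (inner_lines x l \<inter> ({1..<n} \<times> {1..<n}))"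
proof -
  define m where "m = l + 2"
  have m1: "m \<ge> 1" unfolding m_def by simp
  define S where "S = inner_lines x l \<inter> ({1..<n} \<times> {1..<n})"
  define OI where "OI = {i \<in> {1..<n}. \<forall>r<m. x (i - 1 + r) = x (i0 - 1 + r)}"
  define OJ where "OJ = {i \<in> {1..<n}. \<forall>r<m. x (i - 1 + r) = x (j0 - 1 + r)}"
  have i0: "i0 \<in> {1..<n}" and j0: "j0 \<in> {1..<n}" using w by auto
  define M where "M = max 1 ((n - 1) div (C * m))"
  have cI: "card OI \<ge> M" unfolding OI_def M_def by (rule occ_card[OF LR m1 i0])
  have cJ: "card OJ \<ge> M" unfolding OJ_def M_def by (rule occ_card[OF LR m1 j0])
  have sub: "OI \<times> OJ \<subseteq> S"
  proof
    fix p assume "p \<in> OI \<times> OJ"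
    then obtain i j where p: "p = (i, j)" "i \<in> OI" "j \<in> OJ" by auto
    have "(i, j) \<in> inner_lines x l"
      using line_from_occ[of i0 j0 x l i j] w p unfolding OI_def OJ_def m_def by auto
    then show "p \<in> S" using p unfolding S_def OI_def OJ_def by auto
  qed
  have finS: "finite S" unfolding S_def by (rule finite_Int) simp
  have "M * M \<le> card OI * card OJ" using cI cJ by (rule mult_le_mono)
  also have "\<dots> = card (OI \<times> OJ)" by (simp add: card_cartesian_product)
  also have "\<dots> \<le> card S" by (rule card_mono[OF finS sub])
  finally have MS: "M * M \<le> card S" .
  have C1: "C \<ge> 1" using LR by (simp add: LRP_def)
  have Cm: "C * m > 0" using C1 m1 by simp
  have key: "n - 1 \<le> 2 * M * (C * m)"
  proof -
    define N where "N = (n - 1) div (C * m)"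
    have "n - 1 = N * (C * m) + (n - 1) mod (C * m)" unfolding N_def by (rule div_mult_mod_eq[symmetric])
    moreover have "(n - 1) mod (C * m) < C * m" using Cm by simp
    ultimately have "n - 1 < (N + 1) * (C * m)" by (simp add: algebra_simps)
    moreover have "N + 1 \<le> 2 * M" unfolding M_def N_def by simp
    ultimately show ?thesis
      by (metis (no_types, lifting) less_imp_le_nat mult_le_mono1 le_trans mult.assoc)
  qed
  have "m \<le> 3 * l" using l unfolding m_def by simp
  then have "2 * M * (C * m) \<le> 2 * M * (C * (3 * l))" by (intro mult_le_mono2) simp
  moreover have "2 * M * (C * (3 * l)) = 6 * M * C * l" by (simp add: algebra_simps)
  ultimately have k2: "n - 1 \<le> 6 * M * C * l" using key by linarith
  have "n \<le> 2 * (n - 1)" using n by simp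
  then have "n * (n - 1) \<le> 2 * (n - 1) * (n - 1)" by (intro mult_le_mono1)
  also have "\<dots> \<le> 2 * (6 * M * C * l) * (6 * M * C * l)" using k2 by (intro mult_le_mono) simp_all
  also have "\<dots> = 72 * C^2 * l^2 * (M * M)" by (simp add: power2_eq_square algebra_simps)
  also have "\<dots> \<le> 72 * C^2 * l^2 * card S" using MS by (intro mult_le_mono2)
  finally show ?thesis unfolding S_def .
qed


lemma div_eq_close:
  assumes "(a::nat) div h = b div h" "a \<le> b" "h > 0"
  shows "b < a + h"
proof -
  have "b = h * (b div h) + b mod h" by simp
  moreover have "a = h * (a div h) + a mod h" by simp
  moreover have "b mod h < h" using assms by simp
  moreover have "h * (a div h) = h * (b div h)" using assms(1) by simp
  ultimately show ?thesis by linarith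
qed

context fpa begin

lemma rep:
  assumes "LRP x C" "p < p'" "\<forall>t<L. x (p + t) = x (p' + t)"
  shows "L < 2 * C * (p' - p)"
  using repulsion_gen[of C p p' L] assms unfolding LRP_def by blast

lemma same_box:
  assumes LR: "LRP x C" and K: "(i, j) \<in> inner_lines x l" "(i', j') \<in> inner_lines x l"
    and ii: "i \<le> i'" "i' < i + h" and jj: "j' < j + h" "j < j' + h"
    and hl: "(4 * C + 1) * h \<le> l" and h1: "h \<ge> 1"
  shows "i = i' \<and> j = j'"
proof -
  have A: "i > 0" "j > 0" "\<forall>k<l. x (i + k) = x (j + k)"
    using K(1) by (auto simp: inner_lines_def rp_line_def)
  have B: "i' > 0" "j' > 0" "\<forall>k<l. x (i' + k) = x (j' + k)" "x (i' - 1) \<noteq> x (j' - 1)"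
    using K(2) by (auto simp: inner_lines_def rp_line_def)
  have "h \<le> (4 * C + 1) * h" by simp
  then have hl': "h \<le> l" using hl by linarith
  show ?thesis
  proof (cases "i + j' = i' + j")
    case True
    show ?thesis
    proof (cases "i = i'")
      case True then show ?thesis using \<open>i + j' = i' + j\<close> by simp
    next
      case False
      then have lt: "i < i'" using ii by simp
      define k where "k = i' - 1 - i"
      have kl: "k < l" using lt ii hl' unfolding k_def by simp
      have "x (i + k) = x (j + k)" using A(3) kl by simp
      moreover have "i + k = i' - 1" "j + k = j' - 1" using lt True unfolding k_def by simp_all
      ultimately show ?thesis using B(4) by simp
    qed
  next
    case False
    define L where "L = i + l - i'"
    define P1 where "P1 = j + (i' - i)"
    have eqs: "x (P1 + t) = x (j' + t)" if t: "t < L" for t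
    proof -
      have kk: "i' - i + t < l" using t ii unfolding L_def by simp
      have "x (i + (i' - i + t)) = x (j + (i' - i + t))" using A(3) kk by blast
      moreover have "x (i' + t) = x (j' + t)" using B(3) t ii unfolding L_def by simp
      moreover have "i + (i' - i + t) = i' + t" using ii by simp
      ultimately show ?thesis unfolding P1_def by (simp add: add.assoc)
    qed
    have ne: "P1 \<noteq> j'" using False ii unfolding P1_def by simp
    have Lb: "l < L + h" using ii unfolding L_def by simp
    show ?thesis
    proof (cases "P1 < j'")
      case True
      have "L < 2 * C * (j' - P1)" using rep[OF LR True] eqs by blast
      moreover have "j' - P1 < h" using jj unfolding P1_def by simp
      moreover have "2 * C * (j' - P1) \<le> 2 * C * h" using \<open>j' - P1 < h\<close> by (intro mult_le_mono2) simp
      ultimately have "L < 2 * C * h" by linarith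
      then have "l < (2 * C + 1) * h" using Lb by (simp add: algebra_simps)
      moreover have "(2 * C + 1) * h \<le> (4 * C + 1) * h" by (intro mult_le_mono1) simp
      ultimately show ?thesis using hl by simp
    next
      case False
      then have lt: "j' < P1" using ne by simp
      have "L < 2 * C * (P1 - j')" using rep[OF LR lt, of L] eqs by (simp add: eq_commute)
      moreover have "P1 - j' < 2 * h" using jj ii unfolding P1_def by simp
      moreover have "2 * C * (P1 - j') \<le> 2 * C * (2 * h)" using \<open>P1 - j' < 2 * h\<close> by (intro mult_le_mono2) simp
      ultimately have "L < 2 * C * (2 * h)" by linarith
      then have "l < (4 * C + 1) * h" using Lb by (simp add: algebra_simps)
      then show ?thesis using hl by simp
    qed
  qed
qed

end


context fpa begin

lemma upper_nat:
  assumes LR: "LRP x C" and l: "l \<ge> 1" and n: "n \<ge> 2"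
    and w: "(i0, j0) \<in> inner_lines x l \<inter> ({1..<n} \<times> {1..<n})"
  shows "card (inner_lines x l \<inter> ({1..<n} \<times> {1..<n})) * l^2 \<le> (10 * C + 2)^2 * (n * (n - 1))"
proof -
  define S where "S = inner_lines x l \<inter> ({1..<n} \<times> {1..<n})"
  have finS: "finite S" unfolding S_def by (rule finite_Int) simp
  have C1: "C \<ge> 1" using LR by (simp add: LRP_def)
  have cS0: "card S \<le> (n - 1) * (n - 1)"
  proof -
    have "card S \<le> card ({1..<n} \<times> {1..<n})" unfolding S_def by (rule card_mono) auto
    then show ?thesis by (simp add: card_cartesian_product)
  qed
  have nn: "(n - 1) * (n - 1) \<le> n * (n - 1)" by simp
  show ?thesis
  proof (cases "l \<le> 4 * C")
    case True
    have "card S * l^2 \<le> ((n - 1) * (n - 1)) * (4 * C)^2"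
    proof (rule mult_le_mono)
      show "l^2 \<le> (4 * C)^2" using True by (rule power_mono) simp
    qed (rule cS0)
    also have "\<dots> \<le> (n * (n - 1)) * (10 * C + 2)^2"
    proof (rule mult_le_mono)
      show "(4 * C)^2 \<le> (10 * C + 2)^2" by (rule power_mono) simp_all
    qed (rule nn)
    finally show ?thesis unfolding S_def by (simp add: mult.commute)
  next
    case False
    define h where "h = l div (4 * C + 1)"
    have "(4 * C + 1) div (4 * C + 1) \<le> l div (4 * C + 1)" using False by (intro div_le_mono) simp
    then have h1: "h \<ge> 1" unfolding h_def by simp
    have hl: "(4 * C + 1) * h \<le> l" unfolding h_def by (rule times_div_less_eq_dividend)
    have lh: "l < (4 * C + 1) * (h + 1)"
    proof -
      have "l = (4 * C + 1) * h + l mod (4 * C + 1)" unfolding h_def by (rule mult_div_mod_eq[symmetric])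
      moreover have "l mod (4 * C + 1) < 4 * C + 1" by simp
      moreover have "(4 * C + 1) * (h + 1) = (4 * C + 1) * h + (4 * C + 1)" by (simp add: algebra_simps)
      ultimately show ?thesis by linarith
    qed
    define Bn where "Bn = (n - 2) div h + 1"
    define f where "f p = ((fst p - 1) div h, (snd p - 1) div h)" for p :: "nat \<times> nat"
    have blk_close: "a < b + h \<and> b < a + h" if "(a - 1) div h = (b - 1) div h" "a \<ge> 1" "b \<ge> 1" for a b
    proof (cases "a \<le> b")
      case True
      then have "b - 1 < (a - 1) + h" using div_eq_close[OF that(1)] h1 by simp
      then show ?thesis using True that h1 by linarith
    next
      case False
      then have "a - 1 < (b - 1) + h" using div_eq_close[OF that(1)[symmetric]] h1 by simp
      then show ?thesis using False that h1 by linarith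
    qed
    have inj: "inj_on f S"
    proof (rule inj_onI)
      fix p p' assume p: "p \<in> S" "p' \<in> S" "f p = f p'"
      obtain i j where ij: "p = (i, j)" by (cases p)
      obtain i' j' where ij': "p' = (i', j')" by (cases p')
      have K: "(i, j) \<in> inner_lines x l" "(i', j') \<in> inner_lines x l" "i \<ge> 1" "j \<ge> 1" "i' \<ge> 1" "j' \<ge> 1"
        using p ij ij' unfolding S_def by auto
      have ci: "i < i' + h \<and> i' < i + h" using blk_close[of i i'] p(3) ij ij' K unfolding f_def by simp
      have cj: "j < j' + h \<and> j' < j + h" using blk_close[of j j'] p(3) ij ij' K unfolding f_def by simp
      show "p = p'"
      proof (cases "i \<le> i'")
        case True
        then show ?thesis using same_box[OF LR K(1) K(2) True _ _ _ hl h1] ci cj ij ij' by simp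
      next
        case False
        then show ?thesis using same_box[OF LR K(2) K(1) _ _ _ _ hl h1] ci cj ij ij' by simp
      qed
    qed
    have img: "f ` S \<subseteq> {..<Bn} \<times> {..<Bn}"
    proof
      fix y assume "y \<in> f ` S"
      then obtain i j where ij: "(i, j) \<in> S" "y = f (i, j)" by auto
      have "i - 1 \<le> n - 2" "j - 1 \<le> n - 2" using ij unfolding S_def by auto
      then have "(i - 1) div h \<le> (n - 2) div h" "(j - 1) div h \<le> (n - 2) div h"
        by (simp_all add: div_le_mono)
      then show "y \<in> {..<Bn} \<times> {..<Bn}" using ij unfolding f_def Bn_def by auto
    qed
    have cS: "card S \<le> Bn * Bn"
      using card_inj_on_le[OF inj img] by (simp add: card_cartesian_product)
    have W: "i0 \<noteq> j0" "\<forall>k<l. x (i0 + k) = x (j0 + k)" "i0 \<ge> 1" "j0 \<ge> 1" "i0 < n" "j0 < n"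
      using w by (auto simp: inner_lines_def rp_line_def)
    have ln: "l < 2 * C * (n - 2)"
    proof (cases "i0 < j0")
      case True
      have "l < 2 * C * (j0 - i0)" using rep[OF LR True, of l] W(2) by blast
      moreover have "2 * C * (j0 - i0) \<le> 2 * C * (n - 2)" using W by (intro mult_le_mono2) simp
      ultimately show ?thesis by linarith
    next
      case False
      then have lt: "j0 < i0" using W(1) by simp
      have "l < 2 * C * (i0 - j0)" using rep[OF LR lt, of l] W(2) by (simp add: eq_commute)
      moreover have "2 * C * (i0 - j0) \<le> 2 * C * (n - 2)" using W by (intro mult_le_mono2) simp
      ultimately show ?thesis by linarith
    qed
    have l2: "l \<le> 2 * (4 * C + 1) * h"
    proof -
      have "(4 * C + 1) * (h + 1) \<le> (4 * C + 1) * (2 * h)" using h1 by (intro mult_le_mono2) simp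
      then show ?thesis using lh by (simp add: algebra_simps)
    qed
    have "((n - 2) div h) * l \<le> ((n - 2) div h) * (2 * (4 * C + 1) * h)"
      using l2 by (intro mult_le_mono2)
    also have "\<dots> = 2 * (4 * C + 1) * ((n - 2) div h * h)" by (simp add: algebra_simps)
    also have "\<dots> \<le> 2 * (4 * C + 1) * (n - 2)" by (intro mult_le_mono2) simp
    finally have t1: "((n - 2) div h) * l \<le> 2 * (4 * C + 1) * (n - 2)" .
    have "Bn * l = ((n - 2) div h) * l + l" unfolding Bn_def by (simp add: algebra_simps)
    also have "\<dots> \<le> 2 * (4 * C + 1) * (n - 2) + 2 * C * (n - 2)" using t1 ln by linarith
    also have "\<dots> = (10 * C + 2) * (n - 2)" by (simp add: algebra_simps)
    also have "\<dots> \<le> (10 * C + 2) * (n - 1)" by (intro mult_le_mono2) simp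
    finally have Bl: "Bn * l \<le> (10 * C + 2) * (n - 1)" .
    have "card S * l^2 \<le> (Bn * Bn) * l^2" using cS by (intro mult_le_mono1)
    also have "\<dots> = (Bn * l) * (Bn * l)" by (simp add: power2_eq_square algebra_simps)
    also have "\<dots> \<le> ((10 * C + 2) * (n - 1)) * ((10 * C + 2) * (n - 1))" by (rule mult_le_mono[OF Bl Bl])
    also have "\<dots> = (10 * C + 2)^2 * ((n - 1) * (n - 1))" by (simp only: power2_eq_square mult_ac)
    also have "\<dots> \<le> (10 * C + 2)^2 * (n * (n - 1))" using nn by (intro mult_le_mono2)
    finally show ?thesis unfolding S_def .
  qed
qed

end


lemma real_aux1: "(N::real) > 0 \<Longrightarrow> K > 0 \<Longrightarrow> N \<le> K * s \<Longrightarrow> 1 / K \<le> s / N"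
  by (simp add: field_simps)

lemma real_aux2: "(N::real) > 0 \<Longrightarrow> L > 0 \<Longrightarrow> s * L \<le> c * N \<Longrightarrow> s / N \<le> c / L"
  by (simp add: field_simps)

theorem lemma3p1:
  fixes \<zeta> :: "nat \<Rightarrow> nat list" and q :: nat and x :: "nat \<Rightarrow> nat"
  assumes "binary_subst \<zeta>"
    and "q \<ge> 2" and "const_length \<zeta> q"
    and "primitive_subst \<zeta>"
    and "aperiodic_subst \<zeta>"
    and "hd (\<zeta> 0) = 0"
    and "is_fixpoint_limit \<zeta> x"
  shows "\<exists>c0 c :: real. 0 < c0 \<and> c0 \<le> 1 \<and> 1 \<le> c \<and>
    (\<forall>l n. l \<ge> 1 \<longrightarrow> n \<ge> 2 \<longrightarrow> inner_lines x l \<inter> ({1..<n} \<times> {1..<n}) \<noteq> {} \<longrightarrow>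
       c0 / real l ^ 2 \<le> line_density x l n \<and> line_density x l n \<le> c / real l ^ 2)"
proof -
  interpret fpa \<zeta> q x
    by unfold_locales (use assms in auto)
  obtain C where LRC: "LRP x C" using LR unfolding LRP_def by blast
  have C1: "C \<ge> 1" using LRC by (simp add: LRP_def)
  define c0 :: real where "c0 = 1 / (72 * real C ^ 2)"
  define c :: real where "c = real ((10 * C + 2) ^ 2)"
  have c0pos: "0 < c0" using C1 unfolding c0_def by simp
  have "(1::real) \<le> real C" using C1 by simp
  then have "(1::real) \<le> real C ^ 2" by (simp add: one_le_power)
  then have "1 \<le> 72 * real C ^ 2" by simp
  then have c01: "c0 \<le> 1" unfolding c0_def by (simp add: divide_le_eq)
  have c1: "1 \<le> c" unfolding c_def by simp
  have main: "c0 / real l ^ 2 \<le> line_density x l n \<and> line_density x l n \<le> c / real l ^ 2"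
    if l: "l \<ge> 1" and n: "n \<ge> 2" and ne: "inner_lines x l \<inter> ({1..<n} \<times> {1..<n}) \<noteq> {}" for l n
  proof -
    obtain p where p: "p \<in> inner_lines x l \<inter> ({1..<n} \<times> {1..<n})" using ne by blast
    obtain i0 j0 where pij: "p = (i0, j0)" by (cases p)
    have w: "(i0, j0) \<in> inner_lines x l \<inter> ({1..<n} \<times> {1..<n})" using p pij by simp
    define s where "s = card (inner_lines x l \<inter> ({1..<n} \<times> {1..<n}))"
    have N: "real n ^ 2 - real n = real (n * (n - 1))"
      using n by (simp add: power2_eq_square of_nat_diff algebra_simps)
    have Npos: "real (n * (n - 1)) > 0" using n by simp
    have ld: "line_density x l n = real s / real (n * (n - 1))"
      unfolding line_density_def s_def N ..
    have lo: "n * (n - 1) \<le> 72 * C^2 * l^2 * s" using lower_nat[OF LRC l n w] unfolding s_def .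
    have up: "s * l^2 \<le> (10 * C + 2)^2 * (n * (n - 1))" using upper_nat[OF LRC l n w] unfolding s_def .
    have lo': "real (n * (n - 1)) \<le> (72 * real C ^ 2 * real l ^ 2) * real s"
      using lo by (metis (mono_tags, lifting) of_nat_le_iff of_nat_mult of_nat_numeral of_nat_power)
    have up': "real s * real l ^ 2 \<le> c * real (n * (n - 1))"
      using up unfolding c_def by (metis of_nat_le_iff of_nat_mult of_nat_power)
    have Kpos: "72 * real C ^ 2 * real l ^ 2 > 0" using C1 l by simp
    have "c0 / real l ^ 2 = 1 / (72 * real C ^ 2 * real l ^ 2)" unfolding c0_def by simp
    also have "\<dots> \<le> real s / real (n * (n - 1))" by (rule real_aux1[OF Npos Kpos lo'])
    finally have A: "c0 / real l ^ 2 \<le> line_density x l n" using ld by simp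
    have Lpos: "real l ^ 2 > 0" using l by simp
    have B: "line_density x l n \<le> c / real l ^ 2" using real_aux2[OF Npos Lpos up'] ld by simp
    show ?thesis using A B by simp
  qed
  show ?thesis using c0pos c01 c1 main by blast
qed


end
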